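(* There is a constant $c_1>0$ such that for all $n>5$, $$h_3(n,\{(4,0),(4,3)\}) > c_1\, n^{1/3}.$$ That is, every $n$-vertex $3$-graph in which every four vertices span $1$, $2$ or $4$ edges has a clique or coclique of size greater than $c_1 n^{1/3}$.
   Context: For an $r$-uniform hypergraph ($r$-graph) $H$, a homogeneous set is a set of vertices that is either a clique (every $r$-subset is an edge) or a coclique (no $r$-subset is an edge); $h(H)$ denotes the size of a largest homogeneous set. An $(m,f)$-graph is an $r$-graph with $m$ vertices and $f$ edges; $H$ is $(m,f)$-free if it contains no induced sub-hypergraph that is an $(m,f)$-graph. For a set $Q$ of pairs $(m,f)$, $H$ is $Q$-free if it is $(m,f)$-free for every $(m,f)\in Q$. $h_r(n,Q)$ is the minimum of $h(H)$ over all $n$-vertex $Q$-free $r$-graphs $H$. *)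

theory Defs
  imports "HOL-Analysis.Analysis"
begin

definition uniform_hypergraph :: "nat \<Rightarrow> 'a set \<Rightarrow> 'a set set \<Rightarrow> bool" where
  "uniform_hypergraph r V E \<longleftrightarrow> finite V \<and> (\<forall>e\<in>E. e \<subseteq> V \<and> card e = r)"

definition homogeneous :: "nat \<Rightarrow> 'a set set \<Rightarrow> 'a set \<Rightarrow> bool" where
  "homogeneous r E S \<longleftrightarrow>
     (\<forall>e. e \<subseteq> S \<and> card e = r \<longrightarrow> e \<in> E) \<or> (\<forall>e. e \<subseteq> S \<and> card e = r \<longrightarrow> e \<notin> E)"

definition hom_number :: "nat \<Rightarrow> 'a set \<Rightarrow> 'a set set \<Rightarrow> nat" where
  "hom_number r V E = Max {card S | S. S \<subseteq> V \<and> homogeneous r E S}"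

definition mf_free :: "'a set \<Rightarrow> 'a set set \<Rightarrow> nat \<Rightarrow> nat \<Rightarrow> bool" where
  "mf_free V E m f \<longleftrightarrow> \<not> (\<exists>S. S \<subseteq> V \<and> card S = m \<and> card {e \<in> E. e \<subseteq> S} = f)"

definition Q_free :: "'a set \<Rightarrow> 'a set set \<Rightarrow> (nat \<times> nat) set \<Rightarrow> bool" where
  "Q_free V E Q \<longleftrightarrow> (\<forall>(m, f) \<in> Q. mf_free V E m f)"

text \<open>h_r(n,Q): minimum of h(H) over n-vertex Q-free r-graphs (vertex set {0..<n},
  which loses no generality since all notions are isomorphism invariant).\<close>
definition h_num :: "nat \<Rightarrow> nat \<Rightarrow> (nat \<times> nat) set \<Rightarrow> nat" where
  "h_num r n Q = Min {hom_number r {..<n} E | E.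
       uniform_hypergraph r {..<n} E \<and> Q_free {..<n} E Q}"

end

theory Submission
  imports Defs
begin

locale HG =
  fixes n :: nat and E :: "nat set set"
  assumes unif: "uniform_hypergraph 3 {..<n} E"
    and qf: "Q_free {..<n} E {(4, 0), (4, 3)}"
begin

lemma edge_sub: "e \<in> E \<Longrightarrow> e \<subseteq> {..<n} \<and> card e = 3"
  using unif by (auto simp: uniform_hypergraph_def)

lemma sub4:
  assumes "e \<subseteq> {a,b,c,d}" "card e = 3" "distinct [a,b,c,d]"
  shows "e = {a,b,c} \<or> e = {a,b,d} \<or> e = {a,c,d} \<or> e = {b,c,d}"
proof -
  have c4: "card {a,b,c,d} = 4" using assms(3) by auto
  have fe: "finite e" using assms(2) card.infinite by fastforce
  have "\<not> {a,b,c,d} \<subseteq> e"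
  proof
    assume "{a,b,c,d} \<subseteq> e"
    then have "card {a,b,c,d} \<le> card e" using card_mono[OF fe] by blast
    then show False using c4 assms(2) by simp
  qed
  then obtain w where w: "w \<in> {a,b,c,d}" "w \<notin> e" by blast
  have "e \<subseteq> {a,b,c,d} - {w}" using w assms(1) by blast
  moreover have "card ({a,b,c,d} - {w}) = 3" using c4 w(1) by simp
  ultimately have "e = {a,b,c,d} - {w}" using assms(2)
    by (metis card_subset_eq finite.emptyI finite.insertI finite_Diff)
  moreover have "w = a \<or> w = b \<or> w = c \<or> w = d" using w(1) by blast
  moreover have "{a,b,c,d} - {a} = {b,c,d}" "{a,b,c,d} - {b} = {a,c,d}"
     "{a,b,c,d} - {c} = {a,b,d}" "{a,b,c,d} - {d} = {a,b,c}"
    using assms(3) by auto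
  ultimately show ?thesis by metis
qed

lemma nofree: "S \<subseteq> {..<n} \<Longrightarrow> card S = 4 \<Longrightarrow> card {e \<in> E. e \<subseteq> S} \<noteq> 0 \<and> card {e \<in> E. e \<subseteq> S} \<noteq> 3"
  using qf unfolding Q_free_def mf_free_def by auto

lemma F1:
  assumes "a < n" "b < n" "c < n" "d < n" "distinct [a,b,c,d]"
  shows "{a,b,c} \<in> E \<or> {a,b,d} \<in> E \<or> {a,c,d} \<in> E \<or> {b,c,d} \<in> E"
proof (rule ccontr)
  assume H: "\<not> ?thesis"
  have "{e \<in> E. e \<subseteq> {a,b,c,d}} = {}"
  proof -
    { fix e assume "e \<in> E" "e \<subseteq> {a,b,c,d}"
      then have "e = {a,b,c} \<or> e = {a,b,d} \<or> e = {a,c,d} \<or> e = {b,c,d}"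
        using sub4[of e a b c d] edge_sub[of e] assms(5) by simp
      then have False using H \<open>e \<in> E\<close> by metis }
    then show ?thesis by blast
  qed
  moreover have "card {a,b,c,d} = 4" using assms(5) by auto
  moreover have "{a,b,c,d} \<subseteq> {..<n}" using assms by auto
  ultimately show False using nofree[of "{a,b,c,d}"] by simp
qed

lemma F2:
  assumes "a < n" "b < n" "c < n" "d < n" "distinct [a,b,c,d]"
    and "{a,b,c} \<in> E" "{a,b,d} \<in> E" "{a,c,d} \<in> E"
  shows "{b,c,d} \<in> E"
proof (rule ccontr)
  assume H: "{b,c,d} \<notin> E"
  have "{e \<in> E. e \<subseteq> {a,b,c,d}} = {{a,b,c},{a,b,d},{a,c,d}}"
  proof (rule set_eqI, rule iffI)
    fix e assume "e \<in> {e \<in> E. e \<subseteq> {a,b,c,d}}"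
    then have "e \<in> E" "e = {a,b,c} \<or> e = {a,b,d} \<or> e = {a,c,d} \<or> e = {b,c,d}"
      using sub4[of e a b c d] edge_sub[of e] assms(5) by simp_all
    then show "e \<in> {{a,b,c},{a,b,d},{a,c,d}}" using H by (metis insertCI)
  next
    fix e assume "e \<in> {{a,b,c},{a,b,d},{a,c,d}}"
    then show "e \<in> {e \<in> E. e \<subseteq> {a,b,c,d}}" using assms(6-8) by auto
  qed
  moreover have "card {{a,b,c},{a,b,d},{a,c,d}} = 3"
  proof -
    have "d \<notin> {a,b,c}" "c \<notin> {a,b,d}" "b \<notin> {a,c,d}" using assms(5) by auto
    then have "{a,b,c} \<noteq> {a,b,d}" "{a,b,c} \<noteq> {a,c,d}" "{a,b,d} \<noteq> {a,c,d}"
      by blast+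
    then show ?thesis by simp
  qed
  moreover have "card {a,b,c,d} = 4" using assms(5) by auto
  moreover have "{a,b,c,d} \<subseteq> {..<n}" using assms by auto
  ultimately show False using nofree[of "{a,b,c,d}"] by simp
qed


lemma G3:
  assumes "p < n" "u < n" "v < n" "w < n" "distinct [p,u,v,w]"
    and "{p,u,v} \<in> E" "{p,u,w} \<in> E" "{p,v,w} \<in> E"
  shows "{u,v,w} \<in> E"
  using F2[OF assms] .

lemma G2:
  assumes "p < n" "u < n" "v < n" "w < n" "distinct [p,u,v,w]"
    and "{u,v,w} \<in> E" "{p,u,v} \<in> E" "{p,u,w} \<in> E"
  shows "{p,v,w} \<in> E"
proof -
  have "{u,p,v} \<in> E" "{u,p,w} \<in> E" using assms(7,8) by (simp_all add: insert_commute)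
  then show ?thesis using F2[of u p v w] assms by auto
qed

lemma G0:
  assumes "p < n" "u < n" "v < n" "w < n" "distinct [p,u,v,w]"
    and "{p,u,v} \<notin> E" "{p,u,w} \<notin> E" "{p,v,w} \<notin> E"
  shows "{u,v,w} \<in> E"
  using F1[OF assms(1-5)] assms(6-8) by auto

definition k where "k = hom_number 3 {..<n} E"

lemma clique_le:
  assumes "T \<subseteq> {..<n}"
    and "\<And>x y z. x \<in> T \<Longrightarrow> y \<in> T \<Longrightarrow> z \<in> T \<Longrightarrow> x \<noteq> y \<Longrightarrow> x \<noteq> z \<Longrightarrow> y \<noteq> z \<Longrightarrow> {x,y,z} \<in> E"
  shows "card T \<le> k"
proof -
  have "homogeneous 3 E T"
    unfolding homogeneous_def
  proof (rule disjI1, intro allI impI)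
    fix e assume "e \<subseteq> T \<and> card e = 3"
    then obtain x y z where "e = {x,y,z}" "x \<noteq> y" "y \<noteq> z" "x \<noteq> z" "x \<in> T" "y \<in> T" "z \<in> T"
      by (auto simp: card_3_iff)
    then show "e \<in> E" using assms(2) by blast
  qed
  moreover have "finite {card S | S. S \<subseteq> {..<n} \<and> homogeneous 3 E S}"
  proof -
    have "{card S | S. S \<subseteq> {..<n} \<and> homogeneous 3 E S} \<subseteq> card ` Pow {..<n}" by auto
    then show ?thesis using finite_surj by blast
  qed
  ultimately show ?thesis unfolding k_def hom_number_def using assms(1)
    by (intro Max_ge) auto
qed

lemma p_clique_ins:
  assumes "p < n" "S \<subseteq> {..<n} - {p}"
    and "\<And>u v. u \<in> S \<Longrightarrow> v \<in> S \<Longrightarrow> u \<noteq> v \<Longrightarrow> {p,u,v} \<in> E"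
  shows "card (insert p S) \<le> k"
  proof (rule clique_le)
    show "insert p S \<subseteq> {..<n}" using assms by auto
  next
    fix x y z assume H: "x \<in> insert p S" "y \<in> insert p S" "z \<in> insert p S" "x \<noteq> y" "x \<noteq> z" "y \<noteq> z"
    show "{x,y,z} \<in> E"
    proof (cases "x = p")
      case True then show ?thesis using H assms(3) by auto
    next
      case x: False
      show ?thesis
      proof (cases "y = p")
        case True
        then have "{p,x,z} \<in> E" using H x assms(3) by auto
        then show ?thesis using True by (simp add: insert_commute)
      next
        case y: False
        show ?thesis
        proof (cases "z = p")
          case True
          then have "{p,x,y} \<in> E" using H x y assms(3) by auto
          then show ?thesis using True by (simp add: insert_commute)
        next
          case False
          then show ?thesis using G3[of p x y z] H x y assms by auto
        qed
      qed
    qed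
  qed

lemma p_clique:
  assumes "p < n" "S \<subseteq> {..<n} - {p}"
    and "\<And>u v. u \<in> S \<Longrightarrow> v \<in> S \<Longrightarrow> u \<noteq> v \<Longrightarrow> {p,u,v} \<in> E"
  shows "card S \<le> k"
proof -
  have "card (insert p S) \<le> k" by (rule p_clique_ins[OF assms])
  moreover have "finite S" using assms(2) finite_subset by blast
  ultimately show ?thesis by (meson card_insert_le le_trans)
qed

end

locale HG2 = HG +
  fixes a b :: nat
  assumes an: "a < n" and bn: "b < n" and ab: "a \<noteq> b"
begin

definition "Y = {v. v < n \<and> v \<noteq> a \<and> v \<noteq> b \<and> {a,b,v} \<notin> E}"
definition "A u v \<longleftrightarrow> {a,u,v} \<in> E"
definition "B u v \<longleftrightarrow> {b,u,v} \<in> E"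
definition "\<gamma> u v \<longleftrightarrow> A u v \<and> B u v"

lemma Asym: "A u v = A v u" by (simp add: A_def insert_commute)
lemma Bsym: "B u v = B v u" by (simp add: B_def insert_commute)
lemma gsym: "\<gamma> u v = \<gamma> v u" using Asym Bsym \<gamma>_def by auto

lemma Yd: "u \<in> Y \<Longrightarrow> u < n \<and> u \<noteq> a \<and> u \<noteq> b \<and> {a,b,u} \<notin> E" by (simp add: Y_def)

lemma cov: "u \<in> Y \<Longrightarrow> v \<in> Y \<Longrightarrow> u \<noteq> v \<Longrightarrow> A u v \<or> B u v"
  using F1[of a b u v] Yd[of u] Yd[of v] an bn ab unfolding A_def B_def by auto

lemma trans\<gamma>:
  assumes "u \<in> Y" "v \<in> Y" "w \<in> Y" "distinct [u,v,w]" "\<gamma> u v" "\<gamma> u w"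
  shows "\<gamma> v w"
proof -
  note y = Yd[OF assms(1)] Yd[OF assms(2)] Yd[OF assms(3)]
  have "A v w"
  proof (rule ccontr)
    assume "\<not> A v w"
    then have "B v w" using cov assms by auto
    then have "{u,v,w} \<in> E" using G3[of b u v w] assms y bn unfolding B_def \<gamma>_def by auto
    then have "A v w" using G2[of a u v w] assms y an unfolding A_def \<gamma>_def by auto
    then show False using \<open>\<not> A v w\<close> by simp
  qed
  moreover have "B v w"
  proof (rule ccontr)
    assume "\<not> B v w"
    then have "A v w" using cov assms by auto
    then have "{u,v,w} \<in> E" using G3[of a u v w] assms y an unfolding A_def \<gamma>_def by auto
    then have "B v w" using G2[of b u v w] assms y bn unfolding B_def \<gamma>_def by auto
    then show False using \<open>\<not> B v w\<close> by simp
  qed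
  ultimately show ?thesis by (simp add: \<gamma>_def)
qed

lemma Y_sub: "Y \<subseteq> {..<n}" by (auto simp: Y_def)
lemma finY: "finite Y" using Y_sub finite_subset by blast

lemma Y_sub2: "Y \<subseteq> {..<n} - {a}" "Y \<subseteq> {..<n} - {b}" by (auto simp: Y_def)

lemma A_clique: "S \<subseteq> Y \<Longrightarrow> (\<And>u v. u \<in> S \<Longrightarrow> v \<in> S \<Longrightarrow> u \<noteq> v \<Longrightarrow> A u v) \<Longrightarrow> card S \<le> k"
  using p_clique[of a S] an Y_sub2(1) unfolding A_def by blast
lemma B_clique: "S \<subseteq> Y \<Longrightarrow> (\<And>u v. u \<in> S \<Longrightarrow> v \<in> S \<Longrightarrow> u \<noteq> v \<Longrightarrow> B u v) \<Longrightarrow> card S \<le> k"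
  using p_clique[of b S] bn Y_sub2(2) unfolding B_def by blast

definition "C y = {z \<in> Y. z = y \<or> \<gamma> y z}"

lemma C_card: assumes "y \<in> Y" shows "card (C y) \<le> k"
proof (rule A_clique)
  show "C y \<subseteq> Y" by (auto simp: C_def)
next
  fix u v assume H: "u \<in> C y" "v \<in> C y" "u \<noteq> v"
  have "\<gamma> u v"
  proof (cases "u = y")
    case True then show ?thesis using H by (auto simp: C_def)
  next
    case False
    show ?thesis
    proof (cases "v = y")
      case True then show ?thesis using H False gsym by (auto simp: C_def)
    next
      case False
      then show ?thesis using trans\<gamma>[of y u v] H \<open>u \<noteq> y\<close> assms by (auto simp: C_def)
    qed
  qed
  then show "A u v" by (simp add: \<gamma>_def)
qed

definition "R = {y \<in> Y. \<forall>z \<in> Y. \<gamma> y z \<longrightarrow> y \<le> z}"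

lemma R_sub: "R \<subseteq> Y" by (auto simp: R_def)

lemma R_cover: "Y \<subseteq> (\<Union>r\<in>R. C r)"
proof
  fix y assume y: "y \<in> Y"
  have fC: "finite (C y)" using finY by (auto simp: C_def)
  have yC: "y \<in> C y" using y by (auto simp: C_def)
  define r where "r = Min (C y)"
  have rC: "r \<in> C y" using Min_in[OF fC] yC r_def by blast
  have rmin: "\<And>z. z \<in> C y \<Longrightarrow> r \<le> z" using Min_le[OF fC] r_def by blast
  have rY: "r \<in> Y" using rC by (auto simp: C_def)
  have "r \<in> R"
    unfolding R_def
  proof (intro CollectI conjI ballI impI rY)
    fix z assume z: "z \<in> Y" "\<gamma> r z"
    have "z \<in> C y"
    proof (cases "r = y")
      case True then show ?thesis using z by (auto simp: C_def)
    next
      case False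
      then have gyr: "\<gamma> y r" using rC by (auto simp: C_def)
      show ?thesis
      proof (cases "z = y")
        case True then show ?thesis using yC by simp
      next
        case False
        have "z \<noteq> r"
        proof
          assume "z = r"
          then have "{a,r} \<in> E" using z(2) by (simp add: \<gamma>_def A_def)
          then show False using edge_sub[of "{a,r}"] by (simp add: card_insert_if split: if_splits)
        qed
        then have "\<gamma> y z" using trans\<gamma>[of r y z] gyr gsym z False \<open>r \<noteq> y\<close> y rY by auto
        then show ?thesis using z by (auto simp: C_def)
      qed
    qed
    then show "r \<le> z" using rmin by blast
  qed
  moreover have "y \<in> C r"
  proof (cases "r = y")
    case True then show ?thesis using yC by simp
  next
    case False
    then have "\<gamma> y r" using rC by (auto simp: C_def)
    then show ?thesis using y gsym by (auto simp: C_def)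
  qed
  ultimately show "y \<in> (\<Union>r\<in>R. C r)" by blast
qed


lemma card_Y_R: "card Y \<le> card R * k"
proof -
  have fR: "finite R" using R_sub finY finite_subset by blast
  have "card Y \<le> card (\<Union>r\<in>R. C r)"
    using R_cover by (intro card_mono) (auto simp: C_def intro: finite_subset[OF _ finY])
  also have "\<dots> \<le> (\<Sum>r\<in>R. card (C r))" using card_UN_le[OF fR] by blast
  also have "\<dots> \<le> card R * k"
    using sum_bounded_above[of R "\<lambda>r. card (C r)" k] C_card R_sub by auto
  finally show ?thesis .
qed

lemma R_nog: "u \<in> R \<Longrightarrow> v \<in> R \<Longrightarrow> u \<noteq> v \<Longrightarrow> \<not> \<gamma> u v"
  using gsym unfolding R_def by (metis (no_types, lifting) le_antisym mem_Collect_eq)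

lemma R_B: "u \<in> R \<Longrightarrow> v \<in> R \<Longrightarrow> u \<noteq> v \<Longrightarrow> B u v \<longleftrightarrow> \<not> A u v"
  using R_nog[of u v] cov[of u v] R_sub unfolding \<gamma>_def by blast

lemma A2: assumes "u \<in> Y" "v \<in> Y" "w \<in> Y" "distinct [u,v,w]" "{u,v,w} \<in> E" "A u v" "A u w"
  shows "A v w"
proof -
  note yd = Yd[OF assms(1)] Yd[OF assms(2)] Yd[OF assms(3)]
  have "distinct [a,u,v,w]" using yd assms(4) by simp
  then show ?thesis using G2[of a u v w] yd an assms(5-7) unfolding A_def by blast
qed

lemma B2: assumes "u \<in> Y" "v \<in> Y" "w \<in> Y" "distinct [u,v,w]" "{u,v,w} \<in> E" "B u v" "B u w"
  shows "B v w"
proof -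
  note yd = Yd[OF assms(1)] Yd[OF assms(2)] Yd[OF assms(3)]
  have "distinct [b,u,v,w]" using yd assms(4) by simp
  then show ?thesis using G2[of b u v w] yd bn assms(5-7) unfolding B_def by blast
qed

lemma A3: assumes "u \<in> Y" "v \<in> Y" "w \<in> Y" "distinct [u,v,w]" "A u v" "A u w" "A v w"
  shows "{u,v,w} \<in> E"
proof -
  note yd = Yd[OF assms(1)] Yd[OF assms(2)] Yd[OF assms(3)]
  have "distinct [a,u,v,w]" using yd assms(4) by simp
  then show ?thesis using G3[of a u v w] yd an assms(5-7) unfolding A_def by blast
qed

lemma B3: assumes "u \<in> Y" "v \<in> Y" "w \<in> Y" "distinct [u,v,w]" "B u v" "B u w" "B v w"
  shows "{u,v,w} \<in> E"
proof -
  note yd = Yd[OF assms(1)] Yd[OF assms(2)] Yd[OF assms(3)]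
  have "distinct [b,u,v,w]" using yd assms(4) by simp
  then show ?thesis using G3[of b u v w] yd bn assms(5-7) unfolding B_def by blast
qed

lemma tri:
  assumes "u \<in> R" "v \<in> R" "w \<in> R" "distinct [u,v,w]"
  shows "{u,v,w} \<in> E \<longleftrightarrow> (A u v \<longleftrightarrow> A u w) \<and> (A u v \<longleftrightarrow> A v w)"
proof -
  have y: "u \<in> Y" "v \<in> Y" "w \<in> Y" using assms R_sub by auto
  have b1: "B u v \<longleftrightarrow> \<not> A u v" "B u w \<longleftrightarrow> \<not> A u w" "B v w \<longleftrightarrow> \<not> A v w"
    using R_B assms by auto
  have a3: "A u v \<Longrightarrow> A u w \<Longrightarrow> A v w \<Longrightarrow> {u,v,w} \<in> E"
    using A3[OF y assms(4)] by blast
  have b3: "B u v \<Longrightarrow> B u w \<Longrightarrow> B v w \<Longrightarrow> {u,v,w} \<in> E"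
    using B3[OF y assms(4)] by blast
  have e1: "{v,u,w} = {u,v,w}" "{w,u,v} = {u,v,w}" by auto
  have d2: "distinct [v,u,w]" "distinct [w,u,v]" using assms(4) by auto
  have a2: "{u,v,w} \<in> E \<Longrightarrow> A u v \<Longrightarrow> A u w \<Longrightarrow> A v w"
           "{u,v,w} \<in> E \<Longrightarrow> A v u \<Longrightarrow> A v w \<Longrightarrow> A u w"
           "{u,v,w} \<in> E \<Longrightarrow> A w u \<Longrightarrow> A w v \<Longrightarrow> A u v"
    using A2[OF y assms(4)] A2[OF y(2,1,3) d2(1)] A2[OF y(3,1,2) d2(2)] unfolding e1 by blast+
  have b2: "{u,v,w} \<in> E \<Longrightarrow> B u v \<Longrightarrow> B u w \<Longrightarrow> B v w"
           "{u,v,w} \<in> E \<Longrightarrow> B v u \<Longrightarrow> B v w \<Longrightarrow> B u w"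
           "{u,v,w} \<in> E \<Longrightarrow> B w u \<Longrightarrow> B w v \<Longrightarrow> B u v"
    using B2[OF y assms(4)] B2[OF y(2,1,3) d2(1)] B2[OF y(3,1,2) d2(2)] unfolding e1 by blast+
  have s: "A v u = A u v" "A w u = A u w" "A w v = A v w"
          "B v u = B u v" "B w u = B u w" "B w v = B v w" using Asym Bsym by auto
  show ?thesis using a3 b3 a2 b2 b1 s by metis
qed

definition "N u = {z \<in> R. z \<noteq> u \<and> A u z}"
definition "le w v \<longleftrightarrow> N w - {v} \<subseteq> N v - {w}"

lemma nest:
  assumes "u \<in> R" "v \<in> R" "u \<noteq> v"
  shows "le u v \<or> le v u"
proof (rule ccontr)
  assume H: "\<not> (le u v \<or> le v u)"
  then obtain x where x: "x \<in> N u - {v}" "x \<notin> N v - {u}" unfolding le_def by blast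
  obtain y where y: "y \<in> N v - {u}" "y \<notin> N u - {v}" using H unfolding le_def by blast
  have xR: "x \<in> R" "x \<noteq> u" "x \<noteq> v" "A u x" using x by (auto simp: N_def)
  have nx: "\<not> A v x" using x xR by (auto simp: N_def)
  have yR: "y \<in> R" "y \<noteq> v" "y \<noteq> u" "A v y" using y by (auto simp: N_def)
  have ny: "\<not> A u y" using y yR by (auto simp: N_def)
  have xy: "x \<noteq> y" using xR(4) ny by auto
  have d: "distinct [u,v,x,y]" using xR yR xy assms(3) by auto
  have Y4: "u < n" "v < n" "x < n" "y < n" using assms xR yR R_sub Yd by blast+
  have f: "{u,v,x} \<in> E \<or> {u,v,y} \<in> E \<or> {u,x,y} \<in> E \<or> {v,x,y} \<in> E"
    using F1[OF Y4 d] .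
  have t1: "{u,v,x} \<in> E \<longleftrightarrow> (A u v \<longleftrightarrow> A u x) \<and> (A u v \<longleftrightarrow> A v x)"
    using tri[of u v x] assms xR d by auto
  have t2: "{u,v,y} \<in> E \<longleftrightarrow> (A u v \<longleftrightarrow> A u y) \<and> (A u v \<longleftrightarrow> A v y)"
    using tri[of u v y] assms yR d by auto
  have t3: "{u,x,y} \<in> E \<longleftrightarrow> (A u x \<longleftrightarrow> A u y) \<and> (A u x \<longleftrightarrow> A x y)"
    using tri[of u x y] assms xR yR d by auto
  have t4: "{v,x,y} \<in> E \<longleftrightarrow> (A v x \<longleftrightarrow> A v y) \<and> (A v x \<longleftrightarrow> A x y)"
    using tri[of v x y] assms xR yR d by auto
  show False using f t1 t2 t3 t4 xR(4) nx yR(4) ny by blast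
qed

definition "Qs = {v \<in> R. \<exists>w \<in> R. w \<noteq> v \<and> A v w \<and> le w v}"

lemma Qs_A:
  assumes "v \<in> Qs" "v' \<in> Qs" "v \<noteq> v'"
  shows "A v v'"
proof -
  have key: "A x x'" if H: "x \<in> Qs" "x' \<in> Qs" "x \<noteq> x'" "le x x'" for x x'
  proof -
    obtain w where w: "w \<in> R" "w \<noteq> x" "A x w" "le w x" using H(1) unfolding Qs_def by blast
    have xR: "x \<in> R" "x' \<in> R" using H unfolding Qs_def by auto
    show ?thesis
    proof (cases "w = x'")
      case True then show ?thesis using w by simp
    next
      case False
      have "w \<in> N x - {x'}" using w False by (auto simp: N_def)
      then have "w \<in> N x' - {x}" using H(4) unfolding le_def by blast
      then have "A x' w" by (simp add: N_def)
      then have "x' \<in> N w - {x}" using xR H(3) False by (auto simp: N_def Asym)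
      then have "x' \<in> N x - {w}" using w(4) unfolding le_def by blast
      then show ?thesis by (simp add: N_def)
    qed
  qed
  have "v \<in> R" "v' \<in> R" using assms unfolding Qs_def by auto
  then have "le v v' \<or> le v' v" using nest assms(3) by blast
  then show ?thesis using key assms Asym by metis
qed

lemma card_R: "card R \<le> 2 * k"
proof -
  have fR: "finite R" using R_sub finY finite_subset by blast
  have "card Qs \<le> k"
    using A_clique[of Qs] Qs_A R_sub unfolding Qs_def by blast
  moreover have "card (R - Qs) \<le> k"
  proof (rule B_clique)
    show "R - Qs \<subseteq> Y" using R_sub by blast
  next
    fix u v assume H: "u \<in> R - Qs" "v \<in> R - Qs" "u \<noteq> v"
    have "\<not> A u v"
    proof
      assume "A u v"
      have "le u v \<or> le v u" using nest H by blast
      then show False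
      proof
        assume "le u v" then have "v \<in> Qs" using H \<open>A u v\<close> Asym unfolding Qs_def by auto
        then show False using H by blast
      next
        assume "le v u" then have "u \<in> Qs" using H \<open>A u v\<close> unfolding Qs_def by auto
        then show False using H by blast
      qed
    qed
    then show "B u v" using R_B H by blast
  qed
  moreover have "card R \<le> card Qs + card (R - Qs)"
  proof -
    have "Qs \<subseteq> R" by (auto simp: Qs_def)
    then have "Qs \<union> (R - Qs) = R" by blast
    then show ?thesis using card_Un_le[of Qs "R - Qs"] by simp
  qed
  ultimately show ?thesis by linarith
qed

lemma card_Y: "card Y \<le> 2 * k * k"
  using card_Y_R card_R by (meson le_trans mult_le_mono1)

end

lemma greedy:
  fixes U :: "'a set"
  assumes "finite U" "\<And>x y. P x y = P y x"
    "\<And>u. u \<in> U \<Longrightarrow> card {z \<in> U. z \<noteq> u \<and> \<not> P u z} \<le> D"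
  shows "\<exists>S\<subseteq>U. (\<forall>x\<in>S. \<forall>y\<in>S. x \<noteq> y \<longrightarrow> P x y) \<and> card U \<le> card S * (D + 1)"
  using assms
proof (induction "card U" arbitrary: U rule: less_induct)
  case less
  show ?case
  proof (cases "U = {}")
    case True then show ?thesis by auto
  next
    case False
    then obtain u where u: "u \<in> U" by blast
    define Bd where "Bd = insert u {z \<in> U. z \<noteq> u \<and> \<not> P u z}"
    define U' where "U' = U - Bd"
    have fU': "finite U'" using less.prems(1) U'_def by auto
    have lt: "card U' < card U"
      using u less.prems(1) unfolding U'_def Bd_def by (intro psubset_card_mono) auto
    have "\<exists>S\<subseteq>U'. (\<forall>x\<in>S. \<forall>y\<in>S. x \<noteq> y \<longrightarrow> P x y) \<and> card U' \<le> card S * (D + 1)"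
    proof (rule less.hyps[OF lt fU' less.prems(2)])
      fix v assume v: "v \<in> U'"
      have "card {z \<in> U'. z \<noteq> v \<and> \<not> P v z} \<le> card {z \<in> U. z \<noteq> v \<and> \<not> P v z}"
        using less.prems(1) unfolding U'_def by (intro card_mono) auto
      also have "\<dots> \<le> D" using less.prems(3) v unfolding U'_def by auto
      finally show "card {z \<in> U'. z \<noteq> v \<and> \<not> P v z} \<le> D" .
    qed
    then obtain S where S: "S \<subseteq> U'" "\<forall>x\<in>S. \<forall>y\<in>S. x \<noteq> y \<longrightarrow> P x y" "card U' \<le> card S * (D + 1)"
      by blast
    have uS: "u \<notin> S" using S(1) unfolding U'_def Bd_def by auto
    have fS: "finite S" using S(1) fU' finite_subset by blast
    have good: "\<forall>x\<in>insert u S. \<forall>y\<in>insert u S. x \<noteq> y \<longrightarrow> P x y"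
    proof (intro ballI impI)
      fix x y assume xy: "x \<in> insert u S" "y \<in> insert u S" "x \<noteq> y"
      have pu: "P u z" if "z \<in> S" for z
        using that S(1) xy unfolding U'_def Bd_def by auto
      show "P x y" using xy S(2) pu less.prems(2) by auto
    qed
    have "card U \<le> card U' + card Bd"
    proof -
      have "U \<subseteq> U' \<union> Bd" unfolding U'_def by blast
      then have "card U \<le> card (U' \<union> Bd)"
        using less.prems(1) fU' unfolding Bd_def by (intro card_mono) auto
      also have "\<dots> \<le> card U' + card Bd" by (rule card_Un_le)
      finally show ?thesis .
    qed
    moreover have "card Bd \<le> D + 1"
    proof -
      have "card Bd \<le> Suc (card {z \<in> U. z \<noteq> u \<and> \<not> P u z})"
      proof -
        have fin: "finite {z \<in> U. z \<noteq> u \<and> \<not> P u z}" using less.prems(1) by simp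
        show ?thesis unfolding Bd_def using fin by (simp add: card_insert_if)
      qed
      then show ?thesis using less.prems(3)[OF u] by simp
    qed
    moreover have "card (insert u S) * (D + 1) = card S * (D + 1) + (D + 1)"
      using uS fS by simp
    ultimately have cu: "card U \<le> card (insert u S) * (D + 1)"
      using S(3) by linarith
    have sub: "insert u S \<subseteq> U" using S(1) u unfolding U'_def by blast
    show ?thesis
      by (rule exI[of _ "insert u S"], intro conjI, fact sub, fact good, fact cu)
  qed
qed

context HG begin

lemma Ybound:
  assumes "a < n" "b < n" "a \<noteq> b"
  shows "card {v. v < n \<and> v \<noteq> a \<and> v \<noteq> b \<and> {a,b,v} \<notin> E} \<le> 2 * k * k"
proof -
  interpret HG2 n E a b by unfold_locales (use assms in auto)
  show ?thesis using card_Y unfolding Y_def .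
qed

lemma main_bound:
  assumes "n > 0"
  shows "n \<le> 2 * k ^ 3"
proof -
  define U where "U = {1..<n}"
  have fU: "finite U" by (simp add: U_def)
  have deg: "card {z \<in> U. z \<noteq> y \<and> \<not> {0,y,z} \<in> E} \<le> 2 * k * k" if "y \<in> U" for y
  proof -
    have "{z \<in> U. z \<noteq> y \<and> \<not> {0,y,z} \<in> E} \<subseteq> {v. v < n \<and> v \<noteq> 0 \<and> v \<noteq> y \<and> {0,y,v} \<notin> E}"
      by (auto simp: U_def)
    then have "card {z \<in> U. z \<noteq> y \<and> \<not> {0,y,z} \<in> E} \<le> card {v. v < n \<and> v \<noteq> 0 \<and> v \<noteq> y \<and> {0,y,v} \<notin> E}"
      by (intro card_mono) auto
    also have "\<dots> \<le> 2 * k * k" using Ybound[of 0 y] that assms by (auto simp: U_def)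
    finally show ?thesis .
  qed
  have sym: "\<And>x y. ({0,x,y} \<in> E) = ({0,y,x} \<in> E)" by (simp add: insert_commute)
  obtain S where S: "S \<subseteq> U" "\<forall>x\<in>S. \<forall>y\<in>S. x \<noteq> y \<longrightarrow> {0,x,y} \<in> E"
      "card U \<le> card S * (2 * k * k + 1)"
    using greedy[of U "\<lambda>x y. {0,x,y} \<in> E" "2*k*k", OF fU sym deg] by blast
  have "card (insert 0 S) \<le> k"
    by (rule p_clique_ins[of 0 S]) (use assms S in \<open>auto simp: U_def\<close>)
  moreover have "0 \<notin> S" using S(1) by (auto simp: U_def)
  moreover have "finite S" using S(1) fU finite_subset by blast
  ultimately have cS: "card S + 1 \<le> k" by simp
  have cU: "card U = n - 1" by (simp add: U_def)
  define m where "m = k - 1"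
  have km: "k = m + 1" using cS m_def by simp
  have "card S \<le> m" using cS km by simp
  then have "card S * (2*k*k+1) \<le> m * (2*k*k+1)" by (rule mult_le_mono1)
  then have "n - 1 \<le> m * (2*k*k+1)" using S(3) cU by simp
  then have "n \<le> 1 + m * (2*(m+1)*(m+1)+1)" using km by simp
  also have "\<dots> \<le> 2 * (m+1)^3" unfolding power3_eq_cube by (simp add: algebra_simps)
  finally show ?thesis using km by simp
qed

end

lemma real_part:
  fixes n k :: nat
  assumes "n > 0" "n \<le> 2 * k ^ 3"
  shows "1/4 * real n powr (1/3) < real k"
proof -
  have kp: "k > 0" using assms by (cases k) auto
  have h: "real n \<le> real (2 * k ^ 3)" using assms(2) by (simp only: of_nat_le_iff)
  have "real n powr (1/3) \<le> real (2 * k ^ 3) powr (1/3)"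
    by (rule powr_mono2[OF _ _ h]) simp_all
  also have "real (2 * k ^ 3) = 2 * real k powr 3" by simp
  also have "(2 * real k powr 3) powr (1/3) = 2 powr (1/3) * real k"
  proof -
    have "(real k powr 3) powr (1/3) = real k powr (3 * (1/3))" by (rule powr_powr)
    also have "\<dots> = real k" by simp
    finally have c: "(real k powr 3) powr (1/3) = real k" .
    show ?thesis by (simp only: powr_mult c)
  qed
  also have "2 powr (1/3) \<le> (2::real)"
    using powr_mono[of "1/3" 1 "2::real"] by simp
  then have "2 powr (1/3) * real k \<le> 2 * real k" using kp by simp
  finally have "real n powr (1/3) \<le> 2 * real k" by simp
  then show ?thesis using kp by simp
qed

lemma fullE_free:
  fixes n :: nat
  shows "Q_free {..<n} {e. e \<subseteq> {..<n} \<and> card e = 3} {(4, 0), (4, 3)}"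
proof -
  have "card {e \<in> {e. e \<subseteq> {..<n} \<and> card e = 3}. e \<subseteq> S} = 4"
    if "S \<subseteq> {..<n}" "card S = 4" for S :: "nat set"
  proof -
    have "{e \<in> {e. e \<subseteq> {..<n} \<and> card e = 3}. e \<subseteq> S} = {e. e \<subseteq> S \<and> card e = 3}"
      using that(1) by auto
    moreover have "finite S" using that(2) card.infinite by fastforce
    ultimately show ?thesis using n_subsets[of S 3] that(2) by (simp add: numeral_eq_Suc)
  qed
  then show ?thesis unfolding Q_free_def mf_free_def by auto
qed

theorem mainTheorem5:
  shows "\<exists>c1::real. c1 > 0 \<and>
    (\<forall>n::nat. n > 5 \<longrightarrow> real (h_num 3 n {(4, 0), (4, 3)}) > c1 * real n powr (1/3))"
proof (intro exI[of _ "1/4"] conjI allI impI)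
  show "(1/4::real) > 0" by simp
next
  fix n :: nat assume n5: "n > 5"
  define SS where "SS = {hom_number 3 {..<n} E | E. uniform_hypergraph 3 {..<n} E \<and> Q_free {..<n} E {(4,0),(4,3)}}"
  have fin: "finite SS"
  proof -
    have sub: "SS \<subseteq> (\<lambda>E. hom_number 3 {..<n} E) ` Pow (Pow {..<n})"
    proof (rule subsetI)
      fix x assume "x \<in> SS"
      then obtain E where x: "x = hom_number 3 {..<n} E" "uniform_hypergraph 3 {..<n} E"
        unfolding SS_def by blast
      then have "E \<in> Pow (Pow {..<n})" unfolding uniform_hypergraph_def by blast
      then show "x \<in> (\<lambda>E. hom_number 3 {..<n} E) ` Pow (Pow {..<n})" using x(1) by blast
    qed
    have fI: "finite ((\<lambda>E. hom_number 3 {..<n} E) ` Pow (Pow {..<n}))" by simp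
    show ?thesis by (rule finite_subset[OF sub fI])
  qed
  have ne: "SS \<noteq> {}"
  proof -
    have "uniform_hypergraph 3 {..<n} {e. e \<subseteq> {..<n} \<and> card e = 3}"
      by (simp add: uniform_hypergraph_def)
    then show ?thesis using fullE_free[of n] unfolding SS_def by blast
  qed
  have "h_num 3 n {(4, 0), (4, 3)} \<in> SS"
    unfolding h_num_def SS_def[symmetric] using Min_in[OF fin ne] .
  then obtain E where E: "uniform_hypergraph 3 {..<n} E" "Q_free {..<n} E {(4,0),(4,3)}"
      "h_num 3 n {(4, 0), (4, 3)} = hom_number 3 {..<n} E"
    unfolding SS_def by blast
  interpret HG n E using E(1,2) by unfold_locales
  have "n \<le> 2 * k ^ 3" using main_bound n5 by simp
  then have "1/4 * real n powr (1/3) < real k" using real_part n5 by simp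
  then show "real (h_num 3 n {(4, 0), (4, 3)}) > 1/4 * real n powr (1/3)"
    using E(3) k_def by simp
qed

end
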